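(* Let $n \ge r \ge 1$, let $\bm U^\star \in \mathbb{R}^{n\times r}$ have rows $\bm u_1^\star,\dots,\bm u_n^\star \in \mathbb{R}^r$ (written as column vectors), and let $\bm M = \bm M^\star := \bm U^\star \bm U^{\star T}$ (noiseless case). Let $\Omega = \{(i,j)\in[n]\times[n] : m_{ij} \ge 0\}$ (ReLU sampling), and let $$F(\bm U) = \tfrac14 \left\| (\bm U\bm U^T - \bm M)_\Omega\right\|_F^2, \qquad \bm U \in \mathbb{R}^{n\times r}.$$ Let $\mathcal{C}_1,\dots,\mathcal{C}_{2^r}$ be the $2^r$ orthants of $\mathbb{R}^r$, ordered so that for each $i\in[2^r-1]$ the sign patterns of $\mathcal{C}_i$ and $\mathcal{C}_{i+1}$ differ in exactly one coordinate. Suppose $[n]$ is partitioned into index sets $J_1,\dots,J_{2^r}$ such that $\bm u_k^\star \in \mathcal{C}_i$ for every $k\in J_i$, and let $\bm U_i^\star \in \mathbb{R}^{|J_i|\times r}$ be the submatrix of $\bm U^\star$ formed by the rows indexed by $J_i$. Assume: (1) $\mathrm{rank}(\bm U_i^\star) = r$ for every $i\in[2^r]$; (2) for every $i \in [2^r-1]$, letting $\Omega_{i+1,i} = \{(k,l)\in J_{i+1}\times J_i : \bm u_k^{\star T}\bm u_l^\star \ge 0\}$, we have $|\Omega_{i+1,i}| \ge r^2$ and the linear span of $\{\bm u_k^\star \bm u_l^{\star T} : (k,l)\in \Omega_{i+1,i}\}$ equals $\mathbb{R}^{r\times r}$. Then $\bm U\in\mathbb{R}^{n\times r}$ is a global minimizer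 of $F$ over $\mathbb{R}^{n\times r}$ if and only if $\bm U\bm U^T = \bm M^\star$.
   Context: For a matrix $\bm A\in\mathbb{R}^{n\times n}$ and $\Omega\subseteq[n]\times[n]$, $(\bm A)_\Omega$ denotes the matrix that agrees with $\bm A$ on entries in $\Omega$ and is zero elsewhere. $[n]=\{1,\dots,n\}$. $m_{ij}$ denotes the $(i,j)$ entry of $\bm M$. *)

theory Defs
  imports "HOL-Analysis.Analysis"
begin

text \<open>The Frobenius norm of a matrix A :: real^'b^'a is the library norm (Euclidean norm
  of the vector of rows, i.e. sqrt of the sum of squares of all entries).\<close>

definition proj_Omega :: "('a \<times> 'b) set \<Rightarrow> real^'b^'a \<Rightarrow> real^'b^'a" where
  "proj_Omega \<Omega> A = (\<chi> i j. if (i, j) \<in> \<Omega> then A $ i $ j else 0)"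

definition relu_Omega :: "real^'n^'n \<Rightarrow> ('n \<times> 'n) set" where
  "relu_Omega M = {(i, j). M $ i $ j \<ge> 0}"

definition lossF :: "real^'n^'n \<Rightarrow> real^'r^'n \<Rightarrow> real" where
  "lossF M U = (1/4) * (norm (proj_Omega (relu_Omega M) (U ** transpose U - M)))\<^sup>2"

definition rank_rows :: "real^'r^'n \<Rightarrow> 'n set \<Rightarrow> nat" where
  "rank_rows U J = dim {row k U | k. k \<in> J}"

definition orthant :: "('r \<Rightarrow> bool) \<Rightarrow> (real^'r) set" where
  "orthant s = {x. \<forall>k. if s k then x $ k \<ge> 0 else x $ k \<le> 0}"

definition outer :: "real^'r \<Rightarrow> real^'r \<Rightarrow> real^'r^'r" where
  "outer u v = (\<chi> a b. u $ a * v $ b)"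

end

theory Submission
  imports Defs
begin

lemma inner_mat: "((M::real^'a^'b) *v v) \<bullet> u = v \<bullet> (transpose M *v u)"
  by (metis dot_lmul_matrix inner_commute transpose_matrix_vector)

lemma outer_inner: "outer a b \<bullet> C = a \<bullet> ((C::real^'r^'r) *v b)"
  by (simp add: outer_def inner_vec_def matrix_vector_mult_def sum_distrib_left mult_ac)

lemma gram_transfer:
  fixes x y :: "'n \<Rightarrow> real^'r"
  assumes "finite J" "\<forall>k\<in>J. \<forall>m\<in>J. y k \<bullet> y m = x k \<bullet> x m" "l\<in>J"
    "(\<Sum>k\<in>J. c k *\<^sub>R x k) = x l"
  shows "(\<Sum>k\<in>J. c k *\<^sub>R y k) = y l"
proof -
  let ?D = "(\<Sum>k\<in>J. c k *\<^sub>R y k) - y l"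
  have 1: "?D \<bullet> y m = 0" if "m\<in>J" for m
  proof -
    have "?D \<bullet> y m = (\<Sum>k\<in>J. c k * (y k \<bullet> y m)) - y l \<bullet> y m"
      by (simp add: inner_diff_left inner_sum_left)
    also have "\<dots> = (\<Sum>k\<in>J. c k * (x k \<bullet> x m)) - x l \<bullet> x m"
      using assms that by simp
    also have "\<dots> = ((\<Sum>k\<in>J. c k *\<^sub>R x k) - x l) \<bullet> x m"
      by (simp add: inner_diff_left inner_sum_left)
    also have "\<dots> = 0" using assms(4) by simp
    finally show ?thesis .
  qed
  have "?D \<bullet> ?D = (\<Sum>k\<in>J. c k * (?D \<bullet> y k)) - ?D \<bullet> y l"
    by (simp add: inner_diff_right inner_sum_right)
  also have "\<dots> = 0" using 1 assms(3) by simp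
  finally show ?thesis by simp
qed

lemma bilin_zero:
  fixes C :: "real^'r^'r"
  assumes sp: "span S = UNIV" and z: "\<forall>a\<in>S. \<forall>b\<in>S. a \<bullet> (C *v b) = 0"
  shows "C = 0"
proof -
  have 1: "C *v b = 0" if "b \<in> S" for b
  proof -
    have "orthogonal (C *v b) (C *v b)"
      by (rule orthogonal_to_span) (use sp z that in \<open>auto simp: orthogonal_def inner_commute\<close>)
    then show ?thesis by (simp add: orthogonal_def)
  qed
  have 2: "C *v v = 0" for v
  proof -
    have "orthogonal ((C *v v) v* C) v"
      by (rule orthogonal_to_span) (use sp 1 in \<open>auto simp: orthogonal_def dot_lmul_matrix\<close>)
    then show ?thesis by (simp add: orthogonal_def dot_lmul_matrix)
  qed
  show ?thesis using 2 by (metis matrix_eq matrix_vector_mult_0)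
qed


lemma mat_sum_v: fixes x :: "'n \<Rightarrow> real^'r"
  shows "(\<chi> a b. \<Sum>k\<in>J. y k $ a * x k $ b) *v v = (\<Sum>k\<in>J. (x k \<bullet> v) *\<^sub>R (y k :: real^'r))"
proof -
  have "((\<chi> a b. \<Sum>k\<in>J. y k $ a * x k $ b) *v v) $ i = (\<Sum>k\<in>J. (x k \<bullet> v) *\<^sub>R y k) $ i" for i
  proof -
    have "((\<chi> a b. \<Sum>k\<in>J. y k $ a * x k $ b) *v v) $ i = (\<Sum>j\<in>UNIV. \<Sum>k\<in>J. y k $ i * x k $ j * v $ j)"
      by (simp add: matrix_vector_mult_def sum_distrib_right)
    also have "\<dots> = (\<Sum>k\<in>J. \<Sum>j\<in>UNIV. y k $ i * x k $ j * v $ j)" by (rule sum.swap)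
    also have "\<dots> = (\<Sum>k\<in>J. (x k \<bullet> v) *\<^sub>R y k) $ i"
      by (simp add: sum_component inner_vec_def sum_distrib_left sum_distrib_right mult_ac)
    finally show ?thesis .
  qed
  then show ?thesis by (simp add: vec_eq_iff)
qed

lemma block:
  fixes x y :: "'n \<Rightarrow> real^'r"
  assumes fin: "finite J" and sp: "span (x ` J) = UNIV"
    and gr: "\<forall>k\<in>J. \<forall>m\<in>J. y k \<bullet> y m = x k \<bullet> x m"
  shows "\<exists>A. (\<forall>k\<in>J. A *v x k = y k) \<and> transpose A ** A = mat 1"
proof -
  define G :: "real^'r^'r" where "G = (\<chi> a b. \<Sum>k\<in>J. x k $ a * x k $ b)"
  have Gv: "G *v v = (\<Sum>k\<in>J. (x k \<bullet> v) *\<^sub>R x k)" for v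
    unfolding G_def by (rule mat_sum_v)
  define B :: "real^'r^'r" where "B = (\<chi> a b. \<Sum>k\<in>J. y k $ a * x k $ b)"
  have Bv: "B *v v = (\<Sum>k\<in>J. (x k \<bullet> v) *\<^sub>R y k)" for v
    unfolding B_def by (rule mat_sum_v)
  have inj: "v = 0" if "G *v v = 0" for v
  proof -
    have "v \<bullet> (G *v v) = (\<Sum>k\<in>J. (x k \<bullet> v)\<^sup>2)"
      by (simp add: Gv inner_sum_right power2_eq_square inner_commute)
    then have "(\<Sum>k\<in>J. (x k \<bullet> v)\<^sup>2) = 0" using that by simp
    then have h: "\<forall>k\<in>J. (x k \<bullet> v)\<^sup>2 = 0" using fin by (simp add: sum_nonneg_eq_0_iff)
    have "orthogonal v v"
      by (rule orthogonal_to_span[of v "x ` J" v]) (use sp h in \<open>auto simp: orthogonal_def inner_commute\<close>)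
    then show ?thesis by (simp add: orthogonal_def)
  qed
  have "\<forall>v. G *v v = 0 \<longrightarrow> v = 0" using inj by blast
  then obtain H where HG: "H ** G = mat 1" using matrix_left_invertible_ker[of G] by blast
  have GH: "G ** H = mat 1" using HG matrix_left_right_inverse[of G H] by simp
  define A where "A = B ** H"
  have Ax: "A *v x l = y l" if "l \<in> J" for l
  proof -
    have "(\<Sum>k\<in>J. (x k \<bullet> (H *v x l)) *\<^sub>R x k) = x l"
      using Gv[of "H *v x l"] GH by (simp add: matrix_vector_mul_assoc)
    then have "(\<Sum>k\<in>J. (x k \<bullet> (H *v x l)) *\<^sub>R y k) = y l"
      by (rule gram_transfer[OF fin gr that])
    then show ?thesis by (simp add: A_def Bv flip: matrix_vector_mul_assoc)
  qed
  have "transpose A ** A - mat 1 = 0"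
  proof (rule bilin_zero[OF sp], intro ballI)
    fix a b assume "a \<in> x ` J" "b \<in> x ` J"
    then obtain k l where kl: "k \<in> J" "l \<in> J" "a = x k" "b = x l" by auto
    have "a \<bullet> ((transpose A ** A - mat 1) *v b) = (A *v a) \<bullet> (A *v b) - a \<bullet> b"
      by (simp add: matrix_vector_mult_diff_rdistrib inner_diff_right inner_mat
          flip: matrix_vector_mul_assoc)
    also have "\<dots> = 0" using kl Ax gr by simp
    finally show "a \<bullet> ((transpose A ** A - mat 1) *v b) = 0" .
  qed
  then have "transpose A ** A = mat 1" by simp
  then show ?thesis using Ax by blast
qed

lemma adjacent:
  fixes x :: "'n \<Rightarrow> real^'r" and A B :: "real^'r^'r"
  assumes oA: "transpose A ** A = mat 1" and oB: "transpose B ** B = mat 1"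
    and sp: "span {outer (x k) (x l) | k l. Q k l} = UNIV"
    and eq: "\<forall>k l. Q k l \<longrightarrow> (B *v x k) \<bullet> (A *v x l) = x k \<bullet> x l"
  shows "A = B"
proof -
  define C where "C = transpose B ** A - mat 1"
  have "orthogonal C C"
  proof (rule orthogonal_to_span)
    show "C \<in> span {outer (x k) (x l) | k l. Q k l}" using sp by simp
    fix p assume "p \<in> {outer (x k) (x l) | k l. Q k l}"
    then obtain k l where "Q k l" "p = outer (x k) (x l)" by auto
    then have "C \<bullet> p = x k \<bullet> (C *v x l)" by (simp add: inner_commute[of C] outer_inner)
    also have "\<dots> = (B *v x k) \<bullet> (A *v x l) - x k \<bullet> x l"
      by (simp add: C_def matrix_vector_mult_diff_rdistrib inner_diff_right inner_mat
          flip: matrix_vector_mul_assoc)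
    also have "\<dots> = 0" using eq \<open>Q k l\<close> by simp
    finally show "orthogonal C p" by (simp add: orthogonal_def)
  qed
  then have "transpose B ** A = mat 1" by (simp add: orthogonal_def C_def)
  moreover have "B ** transpose B = mat 1" using oB matrix_left_right_inverse by blast
  moreover have "(B ** transpose B) ** A = B ** (transpose B ** A)" by (rule matrix_mul_assoc[symmetric])
  ultimately show ?thesis by (simp add: matrix_mul_lid matrix_mul_rid)
qed


lemma chain:
  fixes x y :: "'n::finite \<Rightarrow> real^'r" and J :: "nat \<Rightarrow> 'n set" and N :: nat
  assumes cover: "(\<Union>i<N. J i) = UNIV"
    and inblock: "\<forall>i<N. \<forall>k\<in>J i. \<forall>l\<in>J i. x k \<bullet> x l \<ge> 0"
    and spb: "\<forall>i<N. span (x ` J i) = UNIV"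
    and spo: "\<forall>i. i + 1 < N \<longrightarrow>
        span {outer (x k) (x l) | k l. k \<in> J (i + 1) \<and> l \<in> J i \<and> x k \<bullet> x l \<ge> 0} = UNIV"
    and g: "\<forall>k l. x k \<bullet> x l \<ge> 0 \<longrightarrow> y k \<bullet> y l = x k \<bullet> x l"
  shows "y k \<bullet> y l = x k \<bullet> x l"
proof -
  have "\<forall>i<N. \<exists>A. (\<forall>k\<in>J i. A *v x k = y k) \<and> transpose A ** A = mat 1"
  proof (intro allI impI)
    fix i assume i: "i < N"
    show "\<exists>A. (\<forall>k\<in>J i. A *v x k = y k) \<and> transpose A ** A = mat 1"
    proof (rule block)
      show "finite (J i)" by simp
      show "span (x ` J i) = UNIV" using spb i by blast
      show "\<forall>k\<in>J i. \<forall>m\<in>J i. y k \<bullet> y m = x k \<bullet> x m" using inblock g i by blast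
    qed
  qed
  then obtain A where A: "\<And>i. i < N \<Longrightarrow> (\<forall>k\<in>J i. A i *v x k = y k) \<and> transpose (A i) ** A i = mat 1"
    by metis
  have adj: "A i = A (i + 1)" if i: "i + 1 < N" for i
  proof (rule adjacent[of "A i" "A (i+1)" x "\<lambda>k l. k \<in> J (i + 1) \<and> l \<in> J i \<and> x k \<bullet> x l \<ge> 0"])
    show "transpose (A i) ** A i = mat 1" using A[of i] i by simp
    show "transpose (A (i+1)) ** A (i+1) = mat 1" using A[of "i+1"] i by simp
    show "span {outer (x k) (x l) | k l. k \<in> J (i + 1) \<and> l \<in> J i \<and> x k \<bullet> x l \<ge> 0} = UNIV"
      using spo i by blast
    show "\<forall>k l. k \<in> J (i + 1) \<and> l \<in> J i \<and> x k \<bullet> x l \<ge> 0 \<longrightarrow>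
        (A (i+1) *v x k) \<bullet> (A i *v x l) = x k \<bullet> x l"
      using A[of i] A[of "i+1"] i g by simp
  qed
  have all: "A i = A 0" if "i < N" for i
    using that
  proof (induction i)
    case 0 then show ?case by simp
  next
    case (Suc i) then show ?case using adj[of i] by (metis Suc_eq_plus1 Suc_lessD)
  qed
  obtain i j where ij: "i < N" "j < N" "k \<in> J i" "l \<in> J j" using cover by blast
  have "y k \<bullet> y l = (A 0 *v x k) \<bullet> (A 0 *v x l)"
    using A[of i] A[of j] ij all[of i] all[of j] by simp
  also have "\<dots> = x k \<bullet> ((transpose (A 0) ** A 0) *v x l)"
    by (simp add: inner_mat flip: matrix_vector_mul_assoc)
  also have "\<dots> = x k \<bullet> x l" using A[of 0] ij by simp
  finally show ?thesis .
qed

lemma mmt: "(A ** transpose A) $ i $ j = A $ i \<bullet> (A :: real^'r^'n) $ j"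
  by (simp add: matrix_mult_transpose_dot_row row_def)

lemma loss_nonneg: "lossF M V \<ge> 0"
  by (simp add: lossF_def)

lemma loss_zero: "lossF M V = 0 \<longleftrightarrow> (\<forall>i j. M $ i $ j \<ge> 0 \<longrightarrow> (V ** transpose V) $ i $ j = M $ i $ j)"
  by (auto simp: lossF_def proj_Omega_def relu_Omega_def vec_eq_iff)

lemma orth_prod:
  assumes "a \<in> orthant s" "b \<in> orthant s"
  shows "a \<bullet> b \<ge> 0"
proof -
  have "a $ c * b $ c \<ge> 0" for c
    using assms unfolding orthant_def
    by (cases "s c") (auto intro: mult_nonneg_nonneg mult_nonpos_nonpos dest!: spec[of _ c])
  then show ?thesis by (simp add: inner_vec_def sum_nonneg)
qed

theorem theorem3p3:
  fixes Ustar :: "real^'r^'n"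
    and s :: "nat \<Rightarrow> 'r \<Rightarrow> bool"
    and J :: "nat \<Rightarrow> 'n set"
    and U :: "real^'r^'n"
  defines "M \<equiv> Ustar ** transpose Ustar"
  assumes n_ge_r: "CARD('n) \<ge> CARD('r)"
    and orth_enum: "bij_betw s {..<2 ^ CARD('r)} UNIV"
    and orth_adj: "\<forall>i. i + 1 < 2 ^ CARD('r) \<longrightarrow> card {k. s i k \<noteq> s (i + 1) k} = 1"
    and J_cover: "(\<Union>i<2 ^ CARD('r). J i) = UNIV"
    and J_disj: "\<forall>i<2 ^ CARD('r). \<forall>j<2 ^ CARD('r). i \<noteq> j \<longrightarrow> J i \<inter> J j = {}"
    and J_orth: "\<forall>i<2 ^ CARD('r). \<forall>k\<in>J i. Ustar $ k \<in> orthant (s i)"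
    and rank_cond: "\<forall>i<2 ^ CARD('r). rank_rows Ustar (J i) = CARD('r)"
    and card_cond: "\<forall>i. i + 1 < 2 ^ CARD('r) \<longrightarrow>
        card {(k, l). k \<in> J (i + 1) \<and> l \<in> J i \<and> Ustar $ k \<bullet> Ustar $ l \<ge> 0} \<ge> CARD('r) ^ 2"
    and span_cond: "\<forall>i. i + 1 < 2 ^ CARD('r) \<longrightarrow>
        span {outer (Ustar $ k) (Ustar $ l) | k l. k \<in> J (i + 1) \<and> l \<in> J i \<and> Ustar $ k \<bullet> Ustar $ l \<ge> 0} = UNIV"
  shows "(\<forall>V :: real^'r^'n. lossF M U \<le> lossF M V) \<longleftrightarrow> U ** transpose U = M"
proof
  assume min: "\<forall>V :: real^'r^'n. lossF M U \<le> lossF M V"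
  have "lossF M Ustar = 0" by (simp add: loss_zero M_def)
  then have "lossF M U = 0" using min loss_nonneg[of M U] by (metis order_antisym)
  then have eqs: "\<forall>i j. M $ i $ j \<ge> 0 \<longrightarrow> (U ** transpose U) $ i $ j = M $ i $ j"
    by (simp add: loss_zero)
  have key: "U $ k \<bullet> U $ l = Ustar $ k \<bullet> Ustar $ l" for k l
  proof (rule chain[where J = J and N = "2 ^ CARD('r)"])
    show "(\<Union>i<2 ^ CARD('r). J i) = UNIV" by (rule J_cover)
    show "\<forall>i<2 ^ CARD('r). \<forall>k\<in>J i. \<forall>l\<in>J i. Ustar $ k \<bullet> Ustar $ l \<ge> 0"
      using J_orth orth_prod by blast
    show "\<forall>i<2 ^ CARD('r). span ((\<lambda>k. Ustar $ k) ` J i) = UNIV"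
    proof (intro allI impI)
      fix i :: nat assume i: "i < 2 ^ CARD('r)"
      have eq: "{row k Ustar | k. k \<in> J i} = (\<lambda>k. Ustar $ k) ` J i"
        by (auto simp: row_def)
      have "dim ((\<lambda>k. Ustar $ k) ` J i) = DIM(real^'r)"
        proof -
        have "dim {row k Ustar | k. k \<in> J i} = CARD('r)"
          using rank_cond i unfolding rank_rows_def by blast
        then show ?thesis unfolding eq by simp
      qed
      then show "span ((\<lambda>k. Ustar $ k) ` J i) = UNIV" using dim_eq_full[of "(\<lambda>k. Ustar $ k) ` J i"] by simp
    qed
    show "\<forall>i. i + 1 < 2 ^ CARD('r) \<longrightarrow>
        span {outer (Ustar $ k) (Ustar $ l) | k l. k \<in> J (i + 1) \<and> l \<in> J i \<and> Ustar $ k \<bullet> Ustar $ l \<ge> 0} = UNIV"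
      by (rule span_cond)
    show "\<forall>k l. Ustar $ k \<bullet> Ustar $ l \<ge> 0 \<longrightarrow> U $ k \<bullet> U $ l = Ustar $ k \<bullet> Ustar $ l"
      using eqs by (simp add: M_def mmt)
  qed
  show "U ** transpose U = M"
    by (simp add: vec_eq_iff mmt M_def key)
next
  assume "U ** transpose U = M"
  then have "lossF M U = 0" by (simp add: loss_zero)
  then show "\<forall>V :: real^'r^'n. lossF M U \<le> lossF M V" by (metis loss_nonneg)
qed

end
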